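(* For every forest $F$, the support of $\mathcal{M}_f(\cdot;F)$ is $A(F)$. Moreover, list the elements of $A=A(F)$ as $a_1,\dots,a_k$ in increasing order of progeny (so $a_k=r_1$). Then: (a) if $k=1$, $\mathcal{M}_f(r_1;F)=\frac12$; (b) if $k\ge2$, then $\mathcal{M}_f(a_i;F)=\frac12\log_2\frac{P(a_i)}{P(a_{i-1})}$ for all $1<i\le k$, and $\frac12\log_2\frac{2P(a_1)}{P^*}\le\mathcal{M}_f(a_1;F)\le\frac12$.
   Context: Let $N$ be a finite, totally ordered set of vertices. A directed forest on $N$ is a directed acyclic graph on $N$ with every out-degree at most $1$. For a forest $F$: roots are vertices with no out-edge; $T(x;F)$ is the subtree rooted at $x$ (vertices with a directed path to $x$, including $x$); $P(x)=P(x;F)=|T(x;F)|$; $P^*=\max_xP(x;F)$; $\underline{P}(x;F)=\max_{y\in T(x;F)\setminus\{x\}}P(y;F)$; $F_x$ is $F$ with the out-edge of $x$ removed (if any). Write $P(x)\succ P(y)$ iff $P(x)>P(y)$ or ($P(x)=P(y)$ and $x<y$); $r_1(F)$ is the root of $F$ maximal for $\succ$. $A(F)=\{x\in N:x=r_1(F_x)\}$ (this set forms a directed path in $F$ ending at $r_1$). The mechanism $\mathcal{M}_f$: on roots, $\mathcal{M}_f(r_1(F);F)=1/2$ if $|A(F)|=1$, $=\frac12\log_2\frac{P(r_1)}{\underline{P}(r_1)}$ if $|A(F)|\ge2$, and $\mathcal{M}_f(r;F)=0$ for all other roots $r$; on a non-root $x$, $\mathcal{M}_f(x;F)=\mathcal{M}_f(x;F_x)$.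 *)

theory Defs
  imports Complex_Main
begin

definition forest :: "'a::linorder set \<Rightarrow> ('a \<times> 'a) set \<Rightarrow> bool" where
  "forest N E \<longleftrightarrow> finite N \<and> E \<subseteq> N \<times> N \<and> acyclic E \<and>
     (\<forall>x y z. (x, y) \<in> E \<and> (x, z) \<in> E \<longrightarrow> y = z)"

definition roots :: "'a set \<Rightarrow> ('a \<times> 'a) set \<Rightarrow> 'a set" where
  "roots N E = {x \<in> N. \<forall>y. (x, y) \<notin> E}"

definition subtree :: "'a set \<Rightarrow> ('a \<times> 'a) set \<Rightarrow> 'a \<Rightarrow> 'a set" where
  "subtree N E x = {y \<in> N. (y, x) \<in> E\<^sup>*}"

definition progeny :: "'a set \<Rightarrow> ('a \<times> 'a) set \<Rightarrow> 'a \<Rightarrow> nat" where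
  "progeny N E x = card (subtree N E x)"

definition Pstar :: "'a set \<Rightarrow> ('a \<times> 'a) set \<Rightarrow> nat" where
  "Pstar N E = Max (progeny N E ` N)"

definition Punder :: "'a set \<Rightarrow> ('a \<times> 'a) set \<Rightarrow> 'a \<Rightarrow> nat" where
  "Punder N E x = Max (progeny N E ` (subtree N E x - {x}))"

definition cut :: "('a \<times> 'a) set \<Rightarrow> 'a \<Rightarrow> ('a \<times> 'a) set" where
  "cut E x = {(u, v) \<in> E. u \<noteq> x}"

definition succ_prog :: "'a::linorder set \<Rightarrow> ('a \<times> 'a) set \<Rightarrow> 'a \<Rightarrow> 'a \<Rightarrow> bool" where
  "succ_prog N E x y \<longleftrightarrow> progeny N E x > progeny N E y \<or>
     (progeny N E x = progeny N E y \<and> x < y)"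

definition r1 :: "'a::linorder set \<Rightarrow> ('a \<times> 'a) set \<Rightarrow> 'a" where
  "r1 N E = (THE r. r \<in> roots N E \<and> (\<forall>r' \<in> roots N E. r' \<noteq> r \<longrightarrow> succ_prog N E r r'))"

definition Aset :: "'a::linorder set \<Rightarrow> ('a \<times> 'a) set \<Rightarrow> 'a set" where
  "Aset N E = {x \<in> N. x = r1 N (cut E x)}"

definition Mroot :: "'a::linorder set \<Rightarrow> ('a \<times> 'a) set \<Rightarrow> 'a \<Rightarrow> real" where
  "Mroot N E r =
     (if r = r1 N E then
        (if card (Aset N E) = 1 then 1/2
         else 1/2 * log 2 (real (progeny N E r) / real (Punder N E r)))
      else 0)"

definition Mf :: "'a::linorder set \<Rightarrow> ('a \<times> 'a) set \<Rightarrow> 'a \<Rightarrow> real" where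
  "Mf N E x = (if x \<in> roots N E then Mroot N E x else Mroot N (cut E x) x)"

end

theory Submission
  imports Defs
begin

lemma forestD:
  assumes "forest N E"
  shows "finite N" "E \<subseteq> N \<times> N" "acyclic E" "\<And>x y z. (x,y)\<in>E \<Longrightarrow> (x,z)\<in>E \<Longrightarrow> y = z"
  using assms unfolding forest_def by blast+

lemma finite_E: assumes "forest N E" shows "finite E"
  using finite_subset[OF forestD(2)[OF assms] finite_cartesian_product[OF forestD(1)[OF assms] forestD(1)[OF assms]]] .

lemma rt_in_N: assumes F: "forest N E" shows "(u,v)\<in>E\<^sup>* \<Longrightarrow> u \<in> N \<Longrightarrow> v \<in> N"
proof (induction rule: rtrancl_induct)
  case (step y z) then show ?case using forestD(2)[OF F] by blast
qed auto

lemma antisym_rt: assumes "forest N E" "(u,v)\<in>E\<^sup>*" "(v,u)\<in>E\<^sup>*" shows "u = v"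
proof (rule ccontr)
  assume "u \<noteq> v"
  then have "(u,v)\<in>E\<^sup>+" using assms(2) by (meson rtranclD)
  then have "(u,u)\<in>E\<^sup>+" using assms(3) by simp
  then show False using forestD(3)[OF assms(1)] unfolding acyclic_def by blast
qed

lemma comparable: assumes F: "forest N E" shows "(y,a)\<in>E\<^sup>* \<Longrightarrow> (y,b)\<in>E\<^sup>* \<Longrightarrow> (a,b)\<in>E\<^sup>* \<or> (b,a)\<in>E\<^sup>*"
proof (induction arbitrary: b rule: converse_rtrancl_induct)
  case base then show ?case by simp
next
  case (step y y')
  show ?case
  proof (cases "y = b")
    case True then show ?thesis using step by (meson converse_rtrancl_into_rtrancl)
  next
    case False
    then obtain y'' where "(y,y'')\<in>E" "(y'',b)\<in>E\<^sup>*" using step(4) by (meson converse_rtranclE)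
    then have "y'' = y'" using forestD(4)[OF F] step(1) by blast
    then show ?thesis using step.IH \<open>(y'',b)\<in>E\<^sup>*\<close> by blast
  qed
qed

lemma step_through: assumes F: "forest N E" and "(c,z)\<in>E\<^sup>*" "c \<noteq> z" "(c,x)\<in>E" shows "(x,z)\<in>E\<^sup>*"
proof -
  obtain y where "(c,y)\<in>E" "(y,z)\<in>E\<^sup>*" using assms(2,3) by (meson converse_rtranclE)
  then show ?thesis using forestD(4)[OF F] assms(4) by blast
qed

lemma root_noout: "r \<in> roots N E \<Longrightarrow> (r,v)\<in>E\<^sup>* \<Longrightarrow> v = r"
  unfolding roots_def by (auto elim: converse_rtranclE)

lemma root_unique: assumes F: "forest N E" "(x,R)\<in>E\<^sup>*" "(x,R')\<in>E\<^sup>*" "R \<in> roots N E" "R' \<in> roots N E"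
  shows "R = R'"
  using comparable[OF F(1) F(2,3)] root_noout F(4,5) by metis

lemma root_exists: assumes F: "forest N E" and "x \<in> N" shows "\<exists>R\<in>roots N E. (x,R)\<in>E\<^sup>*"
proof -
  have wf: "wf (E\<inverse>)" using finite_acyclic_wf_converse finite_E[OF F] forestD(3)[OF F] by blast
  show ?thesis using \<open>x\<in>N\<close>
  proof (induction x rule: wf_induct[OF wf])
    case (1 x)
    show ?case
    proof (cases "\<exists>y. (x,y)\<in>E")
      case True
      then obtain y where y: "(x,y)\<in>E" by blast
      then have "y \<in> N" using forestD(2)[OF F] by blast
      then obtain R where "R\<in>roots N E" "(y,R)\<in>E\<^sup>*" using 1 y by blast
      then show ?thesis using y by (meson converse_rtrancl_into_rtrancl)
    next
      case False then show ?thesis using 1 unfolding roots_def by auto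
    qed
  qed
qed

lemma subtree_finite: "forest N E \<Longrightarrow> finite (subtree N E x)"
  unfolding subtree_def using forestD(1) by force

lemma subtree_mono: "(u,v)\<in>E\<^sup>* \<Longrightarrow> subtree N E u \<subseteq> subtree N E v"
  unfolding subtree_def by auto

lemma progeny_pos: assumes F: "forest N E" and x: "x \<in> N" shows "progeny N E x \<ge> 1"
proof -
  have "x \<in> subtree N E x" unfolding subtree_def using x by simp
  then have "subtree N E x \<noteq> {}" by blast
  then have "card (subtree N E x) \<noteq> 0" using subtree_finite[OF F] by simp
  then show ?thesis unfolding progeny_def by simp
qed

lemma progeny_mono: assumes "forest N E" "(u,v)\<in>E\<^sup>*" shows "progeny N E u \<le> progeny N E v"
  unfolding progeny_def using card_mono[OF subtree_finite[OF assms(1)] subtree_mono[OF assms(2)]] .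

lemma progeny_smono: assumes F: "forest N E" and "(u,v)\<in>E\<^sup>*" "u \<noteq> v" "u \<in> N"
  shows "progeny N E u < progeny N E v"
proof -
  have vN: "v \<in> N" using rt_in_N[OF F assms(2) assms(4)] .
  have vu: "(v,u) \<notin> E\<^sup>*" using antisym_rt[OF F assms(2)] assms(3) by blast
  have a: "v \<in> subtree N E v" unfolding subtree_def using vN by simp
  have b: "v \<notin> subtree N E u" unfolding subtree_def using vu by simp
  have c: "subtree N E u \<subseteq> subtree N E v" using subtree_mono[OF assms(2)] .
  have "subtree N E u \<subset> subtree N E v" using a b c by blast
  then show ?thesis unfolding progeny_def
    using psubset_card_mono[OF subtree_finite[OF F]] by blast
qed

lemma cut_sub: "cut E x \<subseteq> E" unfolding cut_def by auto

lemma cut_forest: assumes F: "forest N E" shows "forest N (cut E x)"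
proof -
  have "acyclic (cut E x)" using acyclic_subset[OF forestD(3)[OF F] cut_sub] .
  moreover have "cut E x \<subseteq> N \<times> N" using cut_sub forestD(2)[OF F] by (rule subset_trans)
  moreover have "\<forall>u y z. (u, y) \<in> cut E x \<and> (u, z) \<in> cut E x \<longrightarrow> y = z"
    unfolding cut_def using forestD(4)[OF F] by blast
  ultimately show ?thesis using forestD(1)[OF F] unfolding forest_def by (intro conjI)
qed

lemma rt_cut_mono: "(y,z)\<in>(cut E x)\<^sup>* \<Longrightarrow> (y,z)\<in>E\<^sup>*"
  using subsetD[OF rtrancl_mono[OF cut_sub[of E x]]] .

lemma self_loop: assumes F: "forest N E" shows "(x,x) \<notin> E"
  using forestD(3)[OF F] unfolding acyclic_def by blast

lemma rt_cut1: assumes F: "forest N E" shows "(y,z)\<in>(cut E x)\<^sup>* \<Longrightarrow> \<not>((y,x)\<in>E\<^sup>* \<and> (x,z)\<in>E\<^sup>* \<and> x \<noteq> z)"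
proof (induction rule: rtrancl_induct)
  case base
  show ?case
  proof
    assume "(y,x)\<in>E\<^sup>* \<and> (x,y)\<in>E\<^sup>* \<and> x \<noteq> y"
    then show False using antisym_rt[OF F, of x y] by blast
  qed
next
  case (step z w)
  show ?case
  proof
    assume a: "(y,x)\<in>E\<^sup>* \<and> (x,w)\<in>E\<^sup>* \<and> x \<noteq> w"
    have zw: "(z,w)\<in>E" "z \<noteq> x" using step(2) unfolding cut_def by auto
    have yz: "(y,z)\<in>E\<^sup>*" using rt_cut_mono[OF step(1)] .
    have "(x,z)\<notin>E\<^sup>* \<or> x = z" using step(3) a by blast
    then have nxz: "(x,z)\<notin>E\<^sup>*" using zw(2) by blast
    have "(y,x)\<in>E\<^sup>*" using a by blast
    then have "(z,x)\<in>E\<^sup>*" using comparable[OF F yz] nxz by blast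
    then have "(w,x)\<in>E\<^sup>*" using step_through[OF F _ zw(2) zw(1)] by blast
    then have "w = x" using antisym_rt[OF F, of w x] a by blast
    then show False using a by blast
  qed
qed

lemma rt_cut2: assumes F: "forest N E" shows "(y,z)\<in>E\<^sup>* \<Longrightarrow> \<not>((y,x)\<in>E\<^sup>* \<and> (x,z)\<in>E\<^sup>* \<and> x \<noteq> z) \<Longrightarrow> (y,z)\<in>(cut E x)\<^sup>*"
proof (induction rule: converse_rtrancl_induct)
  case base then show ?case by simp
next
  case (step y y')
  have e: "(y,y')\<in>E" and r: "(y',z)\<in>E\<^sup>*" and p: "\<not>((y,x)\<in>E\<^sup>* \<and> (x,z)\<in>E\<^sup>* \<and> x \<noteq> z)"
    using step by blast+
  have yzE: "(y,z)\<in>E\<^sup>*" using converse_rtrancl_into_rtrancl[OF e r] .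
  have "y \<noteq> x"
  proof
    assume yx: "y = x"
    show False
    proof (cases "z = x")
      case True
      then have "(y',y)\<in>E\<^sup>*" using r yx by simp
      moreover have "(y,y')\<in>E\<^sup>*" using e by simp
      ultimately have "y = y'" using antisym_rt[OF F, of y y'] by blast
      then show False using e self_loop[OF F, of y] by simp
    next
      case False
      then show False using p yx yzE by simp
    qed
  qed
  then have "(y,y')\<in>cut E x" using e unfolding cut_def by auto
  moreover have "\<not>((y',x)\<in>E\<^sup>* \<and> (x,z)\<in>E\<^sup>* \<and> x \<noteq> z)"
  proof
    assume "(y',x)\<in>E\<^sup>* \<and> (x,z)\<in>E\<^sup>* \<and> x \<noteq> z"
    moreover then have "(y,x)\<in>E\<^sup>*" using converse_rtrancl_into_rtrancl[OF e] by blast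
    ultimately show False using p by blast
  qed
  then have "(y',z)\<in>(cut E x)\<^sup>*" using step.IH by blast
  ultimately show ?case by (rule converse_rtrancl_into_rtrancl)
qed

lemma rt_cut: assumes F: "forest N E"
  shows "(y,z)\<in>(cut E x)\<^sup>* \<longleftrightarrow> (y,z)\<in>E\<^sup>* \<and> \<not>((y,x)\<in>E\<^sup>* \<and> (x,z)\<in>E\<^sup>* \<and> x \<noteq> z)"
  using rt_cut1[OF F, of y z x] rt_cut2[OF F, of y z x] rt_cut_mono[of y z E x] by blast

lemma progeny_cut: assumes F: "forest N E"
  shows "progeny N (cut E x) z = (if (x,z)\<in>E\<^sup>* \<and> x \<noteq> z then progeny N E z - progeny N E x else progeny N E z)"
proof (cases "(x,z)\<in>E\<^sup>* \<and> x \<noteq> z")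
  case True
  have "subtree N (cut E x) z = subtree N E z - subtree N E x"
    unfolding subtree_def using rt_cut[OF F] True by auto
  moreover have "subtree N E x \<subseteq> subtree N E z" using subtree_mono[of x z E N] True by blast
  ultimately show ?thesis using True unfolding progeny_def
    by (simp add: card_Diff_subset subtree_finite[OF F])
next
  case False
  have "subtree N (cut E x) z = subtree N E z"
    unfolding subtree_def using rt_cut[OF F] False by auto
  then show ?thesis unfolding progeny_def if_not_P[OF False] by simp
qed

lemma roots_cut: "x \<in> N \<Longrightarrow> roots N (cut E x) = insert x (roots N E)"
  unfolding roots_def cut_def by auto

lemma cut_root: "x \<in> roots N E \<Longrightarrow> cut E x = E"
  unfolding roots_def cut_def by auto

lemma cut_cut_same: "cut (cut E x) x = cut E x"
  unfolding cut_def by auto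

lemma Mf_eq: "x \<in> N \<Longrightarrow> Mf N E x = Mroot N (cut E x) x"
  unfolding Mf_def using cut_root[of x N E] by simp

lemma succ_asym: "succ_prog N E a b \<Longrightarrow> succ_prog N E b a \<Longrightarrow> False"
  unfolding succ_prog_def by auto

lemma roots_sub: "roots N E \<subseteq> N" unfolding roots_def by auto

lemma R1u: assumes "r \<in> roots N E" "\<forall>r'\<in>roots N E. r' \<noteq> r \<longrightarrow> succ_prog N E r r'"
  shows "r1 N E = r"
  unfolding r1_def
proof (rule the_equality)
  show "r \<in> roots N E \<and> (\<forall>r'\<in>roots N E. r' \<noteq> r \<longrightarrow> succ_prog N E r r')" using assms by blast
next
  fix s assume s: "s \<in> roots N E \<and> (\<forall>r'\<in>roots N E. r' \<noteq> s \<longrightarrow> succ_prog N E s r')"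
  show "s = r"
  proof (rule ccontr)
    assume "s \<noteq> r"
    then have "succ_prog N E s r" "succ_prog N E r s" using s assms by auto
    then show False by (rule succ_asym)
  qed
qed

lemma R1: assumes F: "forest N E" and ne: "N \<noteq> {}"
  shows "r1 N E \<in> roots N E \<and> (\<forall>r'\<in>roots N E. r' \<noteq> r1 N E \<longrightarrow> succ_prog N E (r1 N E) r')"
proof -
  obtain x where x: "x \<in> N" using ne by blast
  obtain R where R: "R \<in> roots N E" using root_exists[OF F x] by blast
  have fin: "finite (roots N E)" using finite_subset[OF roots_sub forestD(1)[OF F]] .
  define M where "M = Max (progeny N E ` roots N E)"
  define S where "S = {r\<in>roots N E. progeny N E r = M}"
  have "M \<in> progeny N E ` roots N E" unfolding M_def
    using Max_in[of "progeny N E ` roots N E"] fin R by blast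
  then have Sne: "S \<noteq> {}" unfolding S_def by auto
  have Sfin: "finite S" unfolding S_def using fin by auto
  define r where "r = Min S"
  have rS: "r \<in> S" unfolding r_def using Sne Sfin by auto
  have "\<forall>r'\<in>roots N E. r' \<noteq> r \<longrightarrow> succ_prog N E r r'"
  proof (intro ballI impI)
    fix r' assume r': "r' \<in> roots N E" "r' \<noteq> r"
    have "progeny N E r' \<le> M" unfolding M_def using fin r' by auto
    moreover have "progeny N E r' = M \<Longrightarrow> r \<le> r'" unfolding r_def using Sfin r'(1) S_def by simp
    moreover have "progeny N E r = M" using rS S_def by simp
    ultimately show "succ_prog N E r r'" unfolding succ_prog_def using r'(2) by auto
  qed
  moreover have "r \<in> roots N E" using rS S_def by auto
  ultimately have "r1 N E = r" by (intro R1u)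
  then show ?thesis using \<open>r \<in> roots N E\<close> \<open>\<forall>r'\<in>roots N E. r' \<noteq> r \<longrightarrow> succ_prog N E r r'\<close> by simp
qed

lemma CH: assumes F: "forest N E" and x: "x \<in> N"
  shows "x \<in> Aset N E \<longleftrightarrow> (\<forall>r'\<in>roots N E. r' \<noteq> x \<longrightarrow> succ_prog N (cut E x) x r')"
proof -
  have F': "forest N (cut E x)" using cut_forest[OF F] .
  have ne: "N \<noteq> {}" using x by blast
  have rc: "roots N (cut E x) = insert x (roots N E)" using roots_cut[OF x] .
  show ?thesis
  proof
    assume "x \<in> Aset N E"
    then have "x = r1 N (cut E x)" unfolding Aset_def by auto
    then show "\<forall>r'\<in>roots N E. r' \<noteq> x \<longrightarrow> succ_prog N (cut E x) x r'"
      using R1[OF F' ne] rc by auto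
  next
    assume "\<forall>r'\<in>roots N E. r' \<noteq> x \<longrightarrow> succ_prog N (cut E x) x r'"
    then have "r1 N (cut E x) = x" using rc by (intro R1u) auto
    then show "x \<in> Aset N E" unfolding Aset_def using x by auto
  qed
qed

lemma root_in_A: assumes F: "forest N E" and "x \<in> roots N E" "x \<in> Aset N E" shows "x = r1 N E"
  using assms(3) cut_root[OF assms(2)] unfolding Aset_def by simp

lemma r1_in_A: assumes F: "forest N E" and ne: "N \<noteq> {}" shows "r1 N E \<in> Aset N E"
proof -
  have r: "r1 N E \<in> roots N E" using R1[OF F ne] by blast
  then have "r1 N E \<in> N" using roots_sub[of N E] by blast
  then show ?thesis using cut_root[OF r] unfolding Aset_def by simp
qed

lemma A_in_N: "x \<in> Aset N E \<Longrightarrow> x \<in> N" unfolding Aset_def by auto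

lemma not_root_if: "(x,R)\<in>E\<^sup>* \<Longrightarrow> x \<noteq> R \<Longrightarrow> x \<notin> roots N E"
  using root_noout by metis

lemma A_below_r1: assumes F: "forest N E" and xA: "x \<in> Aset N E" shows "(x, r1 N E)\<in>E\<^sup>*"
proof -
  have x: "x \<in> N" using A_in_N xA by blast
  have ne: "N \<noteq> {}" using x by blast
  obtain R where R: "R \<in> roots N E" "(x,R)\<in>E\<^sup>*" using root_exists[OF F x] by blast
  show ?thesis
  proof (cases "x = R")
    case True then show ?thesis using root_in_A[OF F, of x] R xA by simp
  next
    case False
    note r = R1[OF F ne]
    show ?thesis
    proof (rule ccontr)
      assume nr: "(x, r1 N E) \<notin> E\<^sup>*"
      then have rR: "r1 N E \<noteq> R" using R by auto
      have xr: "r1 N E \<noteq> x" using nr by auto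
      have "succ_prog N (cut E x) x (r1 N E)" using CH[OF F x] xA r xr by blast
      then have "progeny N E x \<ge> progeny N E (r1 N E)"
        unfolding succ_prog_def progeny_cut[OF F] using nr by auto
      moreover have "progeny N E (r1 N E) \<ge> progeny N E R" using r R rR unfolding succ_prog_def by force
      moreover have "progeny N E x < progeny N E R" using progeny_smono[OF F R(2) False x] .
      ultimately show False by linarith
    qed
  qed
qed

lemma A_up: assumes F: "forest N E" and yA: "y \<in> Aset N E" and yc: "(y,c)\<in>E\<^sup>*" shows "c \<in> Aset N E"
proof (cases "y = c")
  case True then show ?thesis using yA by simp
next
  case False
  have y: "y \<in> N" using A_in_N yA by blast
  have c: "c \<in> N" using rt_in_N[OF F yc y] .
  have lt: "progeny N E y < progeny N E c" using progeny_smono[OF F yc False y] .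
  have yr: "y \<notin> roots N E" using not_root_if[OF yc False] .
  show ?thesis unfolding CH[OF F c]
  proof (intro ballI impI)
    fix r' assume r': "r' \<in> roots N E" "r' \<noteq> c"
    have "succ_prog N (cut E y) y r'" using CH[OF F y] yA r' yr by auto
    then have sy: "progeny N E y \<ge> progeny N (cut E y) r'" unfolding succ_prog_def progeny_cut[OF F] by auto
    show "succ_prog N (cut E c) c r'"
    proof (cases "(c,r')\<in>E\<^sup>*")
      case True
      then have "(y,r')\<in>E\<^sup>*" using yc by auto
      moreover have "y \<noteq> r'" using r'(1) yr by blast
      ultimately have "progeny N (cut E y) r' = progeny N E r' - progeny N E y"
        using progeny_cut[OF F, of y r'] by simp
      moreover have "progeny N (cut E c) r' = progeny N E r' - progeny N E c"
        using progeny_cut[OF F] True r' by auto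
      ultimately show ?thesis unfolding succ_prog_def progeny_cut[OF F, of c c] using sy lt by auto
    next
      case False
      have "(y,r')\<notin>E\<^sup>*"
      proof
        assume "(y,r')\<in>E\<^sup>*"
        then have "(c,r')\<in>E\<^sup>* \<or> (r',c)\<in>E\<^sup>*" using comparable[OF F yc] by blast
        then have "(r',c)\<in>E\<^sup>*" using False by blast
        then have "c = r'" using root_noout[OF r'(1)] by blast
        then show False using r'(2) by simp
      qed
      then have "progeny N (cut E y) r' = progeny N E r'" using progeny_cut[OF F] by auto
      moreover have "progeny N (cut E c) r' = progeny N E r'" using progeny_cut[OF F] False by auto
      ultimately show ?thesis unfolding succ_prog_def progeny_cut[OF F, of c c] using sy lt by auto
    qed
  qed
qed

lemma CH_use: assumes F: "forest N E" and cA: "c \<in> Aset N E" and r: "r' \<in> roots N E" "r' \<noteq> c"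
  shows "succ_prog N (cut E c) c r'"
proof -
  have "\<forall>r'\<in>roots N E. r' \<noteq> c \<longrightarrow> succ_prog N (cut E c) c r'" using CH[OF F A_in_N[OF cA]] cA by simp
  then show ?thesis using r by blast
qed

lemma edge_neq: assumes F: "forest N E" and "(c,x)\<in>E" shows "c \<noteq> x"
  using assms(2) self_loop[OF F, of x] by blast

lemma K1: assumes F: "forest N E" and xA: "x \<in> Aset N E" and cA: "c \<in> Aset N E" and cx: "(c,x)\<in>E"
  shows "Punder N E x = progeny N E c \<and> progeny N E x \<le> 2 * progeny N E c"
proof -
  have x: "x \<in> N" using A_in_N[OF xA] .
  have c: "c \<in> N" using A_in_N[OF cA] .
  have cnx: "c \<noteq> x" using edge_neq[OF F cx] .
  obtain R where R: "R \<in> roots N E" "(x,R)\<in>E\<^sup>*" using root_exists[OF F x] by blast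
  have cR: "(c,R)\<in>E\<^sup>*" using converse_rtrancl_into_rtrancl[OF cx R(2)] .
  have cnr: "c \<notin> roots N E" using cx unfolding roots_def by auto
  have cnR: "c \<noteq> R" using cnr R(1) by auto
  have "succ_prog N (cut E c) c R" using CH_use[OF F cA R(1)] cnR by blast
  moreover have "progeny N (cut E c) R = progeny N E R - progeny N E c"
    using progeny_cut[OF F, of c R] cR cnR by simp
  moreover have "progeny N (cut E c) c = progeny N E c"
    using progeny_cut[OF F, of c c] by simp
  ultimately have "progeny N E c \<ge> progeny N E R - progeny N E c"
    unfolding succ_prog_def by auto
  moreover have "progeny N E R \<ge> progeny N E x" using progeny_mono[OF F R(2)] .
  ultimately have two: "progeny N E x \<le> 2 * progeny N E c" by linarith
  define S where "S = subtree N E x - {x}"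
  have cS: "c \<in> S" unfolding S_def subtree_def using c cx cnx by auto
  have Sfin: "finite S" unfolding S_def using subtree_finite[OF F, of x] by simp
  have bound: "progeny N E z \<le> progeny N E c" if zS: "z \<in> S" for z
  proof (cases "(z,c)\<in>E\<^sup>*")
    case True show ?thesis using progeny_mono[OF F True] .
  next
    case False
    have z: "z \<in> N" "(z,x)\<in>E\<^sup>*" "z \<noteq> x" using zS unfolding S_def subtree_def by auto
    have disj: "subtree N E z \<inter> subtree N E c = {}"
    proof (rule ccontr)
      assume "subtree N E z \<inter> subtree N E c \<noteq> {}"
      then obtain w where w: "(w,z)\<in>E\<^sup>*" "(w,c)\<in>E\<^sup>*" unfolding subtree_def by auto
      have "(z,c)\<in>E\<^sup>* \<or> (c,z)\<in>E\<^sup>*" using comparable[OF F w(1) w(2)] .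
      then have cz: "(c,z)\<in>E\<^sup>*" using False by blast
      have "c \<noteq> z" using False by auto
      then have "(x,z)\<in>E\<^sup>*" using step_through[OF F cz _ cx] by blast
      then have "x = z" using antisym_rt[OF F _ z(2)] by blast
      then show False using z(3) by simp
    qed
    have xz: "x \<notin> subtree N E z"
    proof
      assume "x \<in> subtree N E z"
      then have "(x,z)\<in>E\<^sup>*" unfolding subtree_def by simp
      then show False using antisym_rt[OF F _ z(2)] z(3) by blast
    qed
    have xc: "x \<notin> subtree N E c"
    proof
      assume "x \<in> subtree N E c"
      then have "(x,c)\<in>E\<^sup>*" unfolding subtree_def by simp
      then show False using antisym_rt[OF F _ r_into_rtrancl[OF cx]] cnx by blast
    qed
    have s1: "subtree N E z \<subseteq> subtree N E x" using subtree_mono[OF z(2)] .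
    have s2: "subtree N E c \<subseteq> subtree N E x" using subtree_mono[OF r_into_rtrancl[OF cx]] .
    have s3: "x \<in> subtree N E x" unfolding subtree_def using x by simp
    have sub: "insert x (subtree N E z \<union> subtree N E c) \<subseteq> subtree N E x"
      using s1 s2 s3 by blast
    have fz: "finite (subtree N E z)" using subtree_finite[OF F] .
    have fc: "finite (subtree N E c)" using subtree_finite[OF F] .
    have "card (subtree N E z \<union> subtree N E c) = progeny N E z + progeny N E c"
      unfolding progeny_def using card_Un_disjoint[OF fz fc disj] .
    moreover have "x \<notin> subtree N E z \<union> subtree N E c" using xz xc by blast
    ultimately have "card (insert x (subtree N E z \<union> subtree N E c)) = Suc (progeny N E z + progeny N E c)"
      using fz fc by simp
    then have "Suc (progeny N E z + progeny N E c) \<le> progeny N E x"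
      using card_mono[OF subtree_finite[OF F] sub] unfolding progeny_def by simp
    then show ?thesis using two by linarith
  qed
  have "Punder N E x = progeny N E c" unfolding Punder_def S_def[symmetric]
  proof (rule Max_eqI)
    show "finite (progeny N E ` S)" using Sfin by simp
    show "progeny N E c \<in> progeny N E ` S" using cS by simp
    fix y assume "y \<in> progeny N E ` S"
    then show "y \<le> progeny N E c" using bound by blast
  qed
  then show ?thesis using two by blast
qed

lemma K3: assumes F: "forest N E" and xA: "x \<in> Aset N E" and cA: "c \<in> Aset N E" and cx: "(c,x)\<in>E"
  shows "c \<in> Aset N (cut E x)"
proof -
  let ?E' = "cut E x"
  have F': "forest N ?E'" using cut_forest[OF F] .
  have x: "x \<in> N" using A_in_N[OF xA] .
  have c: "c \<in> N" using A_in_N[OF cA] .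
  have cnx: "c \<noteq> x" using edge_neq[OF F cx] .
  have cxs: "(c,x)\<in>E\<^sup>*" using cx by simp
  have ltcx: "progeny N E c < progeny N E x" using progeny_smono[OF F cxs cnx c] .
  obtain R where R: "R \<in> roots N E" "(x,R)\<in>E\<^sup>*" using root_exists[OF F x] by blast
  have cR: "(c,R)\<in>E\<^sup>*" using converse_rtrancl_into_rtrancl[OF cx R(2)] .
  have cnr: "c \<notin> roots N E" using cx unfolding roots_def by auto
  have cnR: "c \<noteq> R" using cnr R(1) by auto
  have Pcc: "progeny N (cut E c) c = progeny N E c" using progeny_cut[OF F, of c c] by simp
  have "succ_prog N (cut E c) c R" using CH_use[OF F cA R(1)] cnR by blast
  moreover have "progeny N (cut E c) R = progeny N E R - progeny N E c"
    using progeny_cut[OF F, of c R] cR cnR by simp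
  ultimately have sR: "progeny N E c > progeny N E R - progeny N E c \<or> (progeny N E c = progeny N E R - progeny N E c \<and> c < R)"
    unfolding succ_prog_def Pcc by simp
  have xR: "progeny N E x \<le> progeny N E R" using progeny_mono[OF F R(2)] .
  have nxc: "\<not> ((x,c)\<in>E\<^sup>* \<and> x \<noteq> c)" using antisym_rt[OF F cxs] by blast
  have Pc': "progeny N ?E' c = progeny N E c" using progeny_cut[OF F, of x c] nxc by simp
  have Px': "progeny N ?E' x = progeny N E x" using progeny_cut[OF F, of x x] by simp
  have Pc'c: "progeny N (cut ?E' c) c = progeny N E c" using progeny_cut[OF F', of c c] Pc' by simp
  have cx': "(c,x)\<in>?E'" using cx cnx unfolding cut_def by auto
  have "\<forall>r'\<in>roots N ?E'. r' \<noteq> c \<longrightarrow> succ_prog N (cut ?E' c) c r'"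
  proof (intro ballI impI)
    fix r' assume r'0: "r' \<in> roots N ?E'" and r'c: "r' \<noteq> c"
    have r': "r' \<in> insert x (roots N E)" using r'0 roots_cut[OF x, of E] by simp
    show "succ_prog N (cut ?E' c) c r'"
    proof (cases "r' = x")
      case True
      have "progeny N (cut ?E' c) x = progeny N E x - progeny N E c"
        using progeny_cut[OF F', of c x] r_into_rtrancl[OF cx'] cnx Pc' Px' by simp
      then have "progeny N (cut ?E' c) r' = progeny N E x - progeny N E c" using True by simp
      moreover have "progeny N E x - progeny N E c \<le> progeny N E R - progeny N E c" using xR by simp
      moreover have "R = x \<or> progeny N E x < progeny N E R"
        using progeny_smono[OF F R(2) _ x] by blast
      ultimately show ?thesis unfolding succ_prog_def Pc'c
        using sR ltcx True by auto
    next
      case False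
      then have r'r: "r' \<in> roots N E" using r' by simp
      show ?thesis
      proof (cases "(x,r')\<in>E\<^sup>*")
        case True
        have rR: "r' = R" using root_unique[OF F True R(2) r'r R(1)] .
        have nc: "(c,r')\<notin>?E'\<^sup>*" using rt_cut[OF F, of c r' x] True False cxs by blast
        have "progeny N ?E' r' = progeny N E r' - progeny N E x"
          using progeny_cut[OF F, of x r'] True False by simp
        then have "progeny N (cut ?E' c) r' = progeny N E R - progeny N E x"
          using progeny_cut[OF F', of c r'] nc rR by simp
        moreover have "progeny N E R - progeny N E x < progeny N E R - progeny N E c"
          using xR ltcx by linarith
        ultimately show ?thesis unfolding succ_prog_def Pc'c
          using sR by auto
      next
        case nx: False
        have nc: "(c,r')\<notin>E\<^sup>*"
        proof
          assume "(c,r')\<in>E\<^sup>*"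
          then have "(x,r')\<in>E\<^sup>*" using step_through[OF F _ r'c[symmetric] cx] by blast
          then show False using nx by simp
        qed
        have nc': "(c,r')\<notin>?E'\<^sup>*" using nc rt_cut_mono[of c r' E x] by blast
        have "progeny N ?E' r' = progeny N E r'" using progeny_cut[OF F, of x r'] nx by simp
        then have "progeny N (cut ?E' c) r' = progeny N E r'"
          using progeny_cut[OF F', of c r'] nc' by simp
        moreover have "succ_prog N (cut E c) c r'" using CH_use[OF F cA r'r r'c] .
        moreover have "progeny N (cut E c) r' = progeny N E r'" using progeny_cut[OF F, of c r'] nc by simp
        ultimately show ?thesis unfolding succ_prog_def Pc'c Pcc by simp
      qed
    qed
  qed
  then show ?thesis using CH[OF F' c] by simp
qed

lemma enum_exists:
  fixes f :: "'a \<Rightarrow> nat"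
  assumes fin: "finite A" and inj: "inj_on f A"
  shows "\<exists>a. bij_betw a {1..card A} A \<and> (\<forall>i j. 1 \<le> i \<and> i < j \<and> j \<le> card A \<longrightarrow> f (a i) < f (a j))"
proof -
  obtain xs where xs: "sorted_wrt (<) xs" "set xs = f ` A"
    using ex1_sorted_list_for_set_if_finite[of "f ` A"] fin by blast
  have dist: "distinct xs" using strict_sorted_iff[of xs] xs(1) by simp
  have len: "length xs = card A" using distinct_card[OF dist] xs(2) card_image[OF inj] by simp
  have b1: "bij_betw (\<lambda>i. i - 1) {1..card A} {..<card A}"
    by (rule bij_betw_byWitness[where f' = "\<lambda>i. i + 1"]) auto
  have b2: "bij_betw ((!) xs) {..<card A} (f ` A)" using bij_betw_nth[OF dist] len xs(2) by simp
  have b3: "bij_betw (inv_into A f) (f ` A) A"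
    using bij_betw_inv_into[OF inj_on_imp_bij_betw[OF inj]] .
  define a where "a = (\<lambda>i. inv_into A f (xs ! (i - 1)))"
  have "bij_betw a {1..card A} A"
    unfolding a_def using bij_betw_trans[OF bij_betw_trans[OF b1 b2] b3] by (simp add: o_def)
  moreover have "\<forall>i j. 1 \<le> i \<and> i < j \<and> j \<le> card A \<longrightarrow> f (a i) < f (a j)"
  proof (intro allI impI)
    fix i j assume h: "1 \<le> i \<and> i < j \<and> j \<le> card A"
    have il: "i - 1 < length xs" "j - 1 < length xs" using h len by auto
    have "xs ! (i-1) \<in> f ` A" "xs ! (j-1) \<in> f ` A" using nth_mem[OF il(1)] nth_mem[OF il(2)] xs(2) by auto
    then have "f (a i) = xs ! (i-1)" "f (a j) = xs ! (j-1)" unfolding a_def by (auto intro: f_inv_into_f)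
    moreover have "xs ! (i-1) < xs ! (j-1)" proof -
      have "i - 1 < j - 1" using h by linarith
      then show ?thesis using sorted_wrt_nth_less[OF xs(1), of "i-1" "j-1"] il(2) by blast
    qed
    ultimately show "f (a i) < f (a j)" by simp
  qed
  ultimately show ?thesis by blast
qed

lemma A_finite: assumes F: "forest N E" shows "finite (Aset N E)"
proof -
  have "Aset N E \<subseteq> N" unfolding Aset_def by auto
  then show ?thesis using finite_subset[OF _ forestD(1)[OF F]] by blast
qed

lemma x_in_A_cut: assumes "x \<in> Aset N E" shows "x \<in> Aset N (cut E x)"
  using assms unfolding Aset_def by (simp add: cut_cut_same)

lemma Mf_card1: assumes "x \<in> Aset N E" "card (Aset N (cut E x)) = 1" shows "Mf N E x = 1/2"
proof -
  have "x = r1 N (cut E x)" using assms(1) unfolding Aset_def by simp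
  then show ?thesis using Mf_eq[OF A_in_N[OF assms(1)]] assms(2) unfolding Mroot_def by simp
qed

lemma L2: assumes F: "forest N E" and xA: "x \<in> Aset N E" and cA: "c \<in> Aset N (cut E x)" and cx: "(c,x)\<in>E"
  shows "Mf N E x = 1/2 * log 2 (real (progeny N E x) / real (progeny N E c))
     \<and> progeny N E x \<le> 2 * progeny N E c \<and> progeny N E c < progeny N E x \<and> progeny N E c \<ge> 1"
proof -
  let ?E' = "cut E x"
  have F': "forest N ?E'" using cut_forest[OF F] .
  have x: "x \<in> N" using A_in_N[OF xA] .
  have c: "c \<in> N" using A_in_N[OF cA] .
  have cnx: "c \<noteq> x" using edge_neq[OF F cx] .
  have cx': "(c,x)\<in>?E'" using cx cnx unfolding cut_def by auto
  have xA': "x \<in> Aset N ?E'" using x_in_A_cut[OF xA] .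
  have K: "Punder N ?E' x = progeny N ?E' c \<and> progeny N ?E' x \<le> 2 * progeny N ?E' c"
    using K1[OF F' xA' cA cx'] .
  have nxc: "\<not> ((x,c)\<in>E\<^sup>* \<and> x \<noteq> c)" using antisym_rt[OF F r_into_rtrancl[OF cx]] by blast
  have Pc': "progeny N ?E' c = progeny N E c" using progeny_cut[OF F, of x c] nxc by simp
  have Px': "progeny N ?E' x = progeny N E x" using progeny_cut[OF F, of x x] by simp
  have fin: "finite (Aset N ?E')" using A_finite[OF F'] .
  have "card (Aset N ?E') \<ge> 2"
  proof -
    have "{x, c} \<subseteq> Aset N ?E'" using xA' cA by auto
    then have "card {x, c} \<le> card (Aset N ?E')" by (rule card_mono[OF fin])
    then show ?thesis using cnx by simp
  qed
  moreover have "x = r1 N ?E'" using xA unfolding Aset_def by auto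
  ultimately have "Mf N E x = 1/2 * log 2 (real (progeny N ?E' x) / real (Punder N ?E' x))"
    using Mf_eq[OF x] unfolding Mroot_def by auto
  moreover have "progeny N E c < progeny N E x" using progeny_smono[OF F r_into_rtrancl[OF cx] cnx c] .
  moreover have "progeny N E c \<ge> 1" using progeny_pos[OF F c] .
  ultimately show ?thesis using K Pc' Px' by simp
qed

lemma L1: assumes F: "forest N E" and xA: "x \<in> Aset N E" and card: "card (Aset N (cut E x)) \<noteq> 1"
  shows "\<exists>c. (c,x)\<in>E \<and> c \<in> Aset N (cut E x)"
proof -
  let ?E' = "cut E x"
  have F': "forest N ?E'" using cut_forest[OF F] .
  have xA': "x \<in> Aset N ?E'" using x_in_A_cut[OF xA] .
  have fin: "finite (Aset N ?E')" using A_finite[OF F'] .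
  obtain d where d: "d \<in> Aset N ?E'" "d \<noteq> x"
  proof (rule ccontr)
    assume "\<not> thesis"
    then have "Aset N ?E' = {x}" using xA' that by blast
    then show False using card by simp
  qed
  have r: "r1 N ?E' = x" using xA unfolding Aset_def by auto
  have "(d,x)\<in>?E'\<^sup>*" using A_below_r1[OF F' d(1)] r by simp
  then have "(d,x)\<in>?E'\<^sup>+" using d(2) rtranclD[of d x ?E'] by blast
  then obtain c where c: "(d,c)\<in>?E'\<^sup>*" "(c,x)\<in>?E'" using tranclD2[of d x ?E'] by blast
  have "c \<in> Aset N ?E'" using A_up[OF F' d(1) c(1)] .
  moreover have "(c,x)\<in>E" using c(2) cut_sub[of E x] by blast
  ultimately show ?thesis by blast
qed

lemma K4: assumes F: "forest N E" and xA: "x \<in> Aset N E" and cA: "c \<in> Aset N (cut E x)" and cx: "(c,x)\<in>E"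
  and cnA: "c \<notin> Aset N E"
  shows "\<exists>r'\<in>roots N E. 2 * progeny N E c \<le> progeny N E r'"
proof -
  let ?E' = "cut E x"
  have F': "forest N ?E'" using cut_forest[OF F] .
  have x: "x \<in> N" using A_in_N[OF xA] .
  have c: "c \<in> N" using A_in_N[OF cA] .
  have cnx: "c \<noteq> x" using edge_neq[OF F cx] .
  have nxc: "\<not> ((x,c)\<in>E\<^sup>* \<and> x \<noteq> c)" using antisym_rt[OF F r_into_rtrancl[OF cx]] by blast
  have Pc': "progeny N ?E' c = progeny N E c" using progeny_cut[OF F, of x c] nxc by simp
  have "\<not> (\<forall>r'\<in>roots N E. r' \<noteq> c \<longrightarrow> succ_prog N (cut E c) c r')" using CH[OF F c] cnA by simp
  then obtain r' where r': "r' \<in> roots N E" "r' \<noteq> c" "\<not> succ_prog N (cut E c) c r'"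
    by blast
  have Pcc: "progeny N (cut E c) c = progeny N E c" using progeny_cut[OF F, of c c] by simp
  have Pc'c: "progeny N (cut ?E' c) c = progeny N E c" using progeny_cut[OF F', of c c] Pc' by simp
  show ?thesis
  proof (cases "(c,r')\<in>E\<^sup>*")
    case True
    then have "progeny N (cut E c) r' = progeny N E r' - progeny N E c" using progeny_cut[OF F, of c r'] r'(2) by simp
    then have "2 * progeny N E c \<le> progeny N E r'" using r'(3) unfolding succ_prog_def Pcc by auto
    then show ?thesis using r' by blast
  next
    case False
    have nx: "(x,r')\<notin>E\<^sup>*" using False converse_rtrancl_into_rtrancl[OF cx, of r'] by blast
    have nc': "(c,r')\<notin>?E'\<^sup>*" using False rt_cut_mono[of c r' E x] by blast
    have r'E': "r' \<in> roots N ?E'" using r'(1) roots_cut[OF x, of E] by simp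
    have "\<forall>r'\<in>roots N ?E'. r' \<noteq> c \<longrightarrow> succ_prog N (cut ?E' c) c r'" using CH[OF F' c] cA by simp
    then have "succ_prog N (cut ?E' c) c r'" using r'E' r'(2) by blast
    moreover have "progeny N (cut ?E' c) r' = progeny N E r'"
      using progeny_cut[OF F', of c r'] nc' progeny_cut[OF F, of x r'] nx by simp
    moreover have "progeny N (cut E c) r' = progeny N E r'" using progeny_cut[OF F, of c r'] False by simp
    ultimately have False using r'(3) unfolding succ_prog_def Pc'c Pcc by simp
    then show ?thesis ..
  qed
qed

lemma log_ineq1: assumes "(px::real) > 0" "pc > 0" "ps > 0" "2 * pc \<le> ps"
  shows "log 2 (2 * px / ps) \<le> log 2 (px / pc)"
proof -
  have "2 * px / ps \<le> px / pc" using assms by (simp add: divide_simps)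
  moreover have "2 * px / ps > 0" using assms by simp
  ultimately show ?thesis by simp
qed

lemma log_ineq2: assumes "(px::real) > 0" "pc > 0" "px \<le> 2 * pc"
  shows "log 2 (px / pc) \<le> 1"
proof -
  have "px / pc \<le> 2" using assms by (simp add: divide_simps)
  moreover have "px / pc > 0" using assms by simp
  ultimately have "log 2 (px / pc) \<le> log 2 2" by simp
  then show ?thesis by simp
qed

lemma Mf_pos: assumes F: "forest N E" and xA: "x \<in> Aset N E" shows "Mf N E x > 0"
proof (cases "card (Aset N (cut E x)) = 1")
  case True then show ?thesis using Mf_card1[OF xA] by simp
next
  case False
  obtain c where c: "(c,x)\<in>E" "c \<in> Aset N (cut E x)" using L1[OF F xA False] by blast
  note L = L2[OF F xA c(2) c(1)]
  have "real (progeny N E x) / real (progeny N E c) > 1" using L by simp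
  then have "log 2 (real (progeny N E x) / real (progeny N E c)) > 0" by simp
  moreover have "Mf N E x = 1/2 * log 2 (real (progeny N E x) / real (progeny N E c))" using L by blast
  ultimately show ?thesis by simp
qed

lemma Mf_zero: assumes x: "x \<in> N" and xA: "x \<notin> Aset N E" shows "Mf N E x = 0"
proof -
  have "x \<noteq> r1 N (cut E x)" using x xA unfolding Aset_def by simp
  then show ?thesis using Mf_eq[OF x] unfolding Mroot_def by simp
qed

lemma Pstar_ge: assumes F: "forest N E" and x: "x \<in> N" shows "progeny N E x \<le> Pstar N E"
  unfolding Pstar_def using Max_ge[of "progeny N E ` N" "progeny N E x"] forestD(1)[OF F] x by simp

lemma enum_props:
  fixes P :: "'a \<Rightarrow> nat" and a :: "nat \<Rightarrow> 'a" and k i j :: nat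
  assumes b: "bij_betw a {1..k} A" and m: "\<forall>i j. 1 \<le> i \<and> i < j \<and> j \<le> k \<longrightarrow> P (a i) < P (a j)"
    and i: "i \<in> {1..k}" and j: "j \<in> {1..k}" and lt: "P (a i) < P (a j)"
  shows "i < j"
proof (rule ccontr)
  assume "\<not> i < j"
  then have "j = i \<or> j < i" by linarith
  then show False
  proof
    assume "j = i" then show False using lt by simp
  next
    assume "j < i" then have "P (a j) < P (a i)" using m i j by auto
    then show False using lt by simp
  qed
qed

lemma A_chain: assumes F: "forest N E" and xA: "x \<in> Aset N E" and yA: "y \<in> Aset N E"
  shows "(x,y)\<in>E\<^sup>* \<or> (y,x)\<in>E\<^sup>*"
proof (rule ccontr)
  assume nc: "\<not> ((x,y)\<in>E\<^sup>* \<or> (y,x)\<in>E\<^sup>*)"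
  have x: "x \<in> N" using A_in_N[OF xA] .
  have y: "y \<in> N" using A_in_N[OF yA] .
  have ne: "N \<noteq> {}" using x by blast
  define r where "r = r1 N E"
  have rroot: "r \<in> roots N E" unfolding r_def using R1[OF F ne] by blast
  have r: "r \<in> N" using rroot roots_sub[of N E] by blast
  have xr: "(x,r)\<in>E\<^sup>*" unfolding r_def using A_below_r1[OF F xA] .
  have yr: "(y,r)\<in>E\<^sup>*" unfolding r_def using A_below_r1[OF F yA] .
  have xnr: "x \<noteq> r" using nc yr by blast
  have ynr: "y \<noteq> r" using nc xr by blast
  have bx: "progeny N E x \<ge> progeny N E r - progeny N E x"
  proof -
    have "succ_prog N (cut E x) x r" using CH_use[OF F xA rroot] xnr by blast
    moreover have "progeny N (cut E x) r = progeny N E r - progeny N E x"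
      using progeny_cut[OF F, of x r] xr xnr by simp
    moreover have "progeny N (cut E x) x = progeny N E x" using progeny_cut[OF F, of x x] by simp
    ultimately show ?thesis unfolding succ_prog_def by auto
  qed
  have "progeny N E y \<ge> progeny N E r - progeny N E y"
  proof -
    have "succ_prog N (cut E y) y r" using CH_use[OF F yA rroot] ynr by blast
    moreover have "progeny N (cut E y) r = progeny N E r - progeny N E y"
      using progeny_cut[OF F, of y r] yr ynr by simp
    moreover have "progeny N (cut E y) y = progeny N E y" using progeny_cut[OF F, of y y] by simp
    ultimately show ?thesis unfolding succ_prog_def by auto
  qed
  have disj: "subtree N E x \<inter> subtree N E y = {}"
  proof (rule ccontr)
    assume "subtree N E x \<inter> subtree N E y \<noteq> {}"
    then obtain w where w: "(w,x)\<in>E\<^sup>*" "(w,y)\<in>E\<^sup>*" unfolding subtree_def by auto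
    show False using comparable[OF F w(1) w(2)] nc by blast
  qed
  have rx: "r \<notin> subtree N E x"
  proof
    assume "r \<in> subtree N E x"
    then have "(r,x)\<in>E\<^sup>*" unfolding subtree_def by simp
    then show False using antisym_rt[OF F xr] xnr by blast
  qed
  have ry: "r \<notin> subtree N E y"
  proof
    assume "r \<in> subtree N E y"
    then have "(r,y)\<in>E\<^sup>*" unfolding subtree_def by simp
    then show False using antisym_rt[OF F yr] ynr by blast
  qed
  have s1: "subtree N E x \<subseteq> subtree N E r" using subtree_mono[OF xr] .
  have s2: "subtree N E y \<subseteq> subtree N E r" using subtree_mono[OF yr] .
  have s3: "r \<in> subtree N E r" unfolding subtree_def using r by simp
  have sub: "insert r (subtree N E x \<union> subtree N E y) \<subseteq> subtree N E r" using s1 s2 s3 by blast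
  have fx: "finite (subtree N E x)" using subtree_finite[OF F] .
  have fy: "finite (subtree N E y)" using subtree_finite[OF F] .
  have "card (subtree N E x \<union> subtree N E y) = progeny N E x + progeny N E y"
    unfolding progeny_def using card_Un_disjoint[OF fx fy disj] .
  moreover have "r \<notin> subtree N E x \<union> subtree N E y" using rx ry by blast
  ultimately have "card (insert r (subtree N E x \<union> subtree N E y)) = Suc (progeny N E x + progeny N E y)"
    using fx fy by simp
  then have "Suc (progeny N E x + progeny N E y) \<le> progeny N E r"
    using card_mono[OF subtree_finite[OF F] sub] unfolding progeny_def by simp
  then show False using bx \<open>progeny N E y \<ge> progeny N E r - progeny N E y\<close> by linarith
qed

theorem lemma1:
  fixes N :: "'a::linorder set" and E :: "('a \<times> 'a) set"
  assumes "forest N E" and "N \<noteq> {}"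
  shows "{x \<in> N. Mf N E x \<noteq> 0} = Aset N E
    \<and> (\<exists>a. bij_betw a {1..card (Aset N E)} (Aset N E)
            \<and> (\<forall>i j. 1 \<le> i \<and> i < j \<and> j \<le> card (Aset N E) \<longrightarrow>
                   progeny N E (a i) < progeny N E (a j)))
    \<and> (\<forall>a. bij_betw a {1..card (Aset N E)} (Aset N E)
            \<and> (\<forall>i j. 1 \<le> i \<and> i < j \<and> j \<le> card (Aset N E) \<longrightarrow>
                   progeny N E (a i) < progeny N E (a j))
          \<longrightarrow> (let k = card (Aset N E) in
                a k = r1 N E
              \<and> (k = 1 \<longrightarrow> Mf N E (r1 N E) = 1/2)
              \<and> (k \<ge> 2 \<longrightarrow>
                   (\<forall>i. 1 < i \<and> i \<le> k \<longrightarrow>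
                      Mf N E (a i) = 1/2 * log 2 (real (progeny N E (a i)) / real (progeny N E (a (i - 1)))))
                 \<and> 1/2 * log 2 (2 * real (progeny N E (a 1)) / real (Pstar N E)) \<le> Mf N E (a 1)
                 \<and> Mf N E (a 1) \<le> 1/2)))"
proof -
  note F = assms(1)
  define A where "A = Aset N E"
  define k where "k = card A"
  define P where "P = progeny N E"
  define r where "r = r1 N E"
  have fin: "finite A" unfolding A_def using A_finite[OF F] .
  have rA: "r \<in> A" unfolding A_def r_def using r1_in_A[OF F assms(2)] .
  have rroot: "r \<in> roots N E" unfolding r_def using R1[OF F assms(2)] by blast
  have below: "(x, r)\<in>E\<^sup>*" if "x \<in> A" for x
    using A_below_r1[OF F, of x] that unfolding A_def r_def by blast
  have AN: "x \<in> N" if "x \<in> A" for x using A_in_N[of x N E] that unfolding A_def by blast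
  have chain: "(x,y)\<in>E\<^sup>* \<or> (y,x)\<in>E\<^sup>*" if "x \<in> A" "y \<in> A" for x y
    using A_chain[OF F, of x y] that unfolding A_def by blast
  have inj: "inj_on P A"
  proof (rule inj_onI)
    fix x y assume xy: "x \<in> A" "y \<in> A" "P x = P y"
    show "x = y"
    proof (rule ccontr)
      assume ne: "x \<noteq> y"
      from chain[OF xy(1) xy(2)] show False
      proof
        assume "(x,y)\<in>E\<^sup>*"
        then have "P x < P y" unfolding P_def using progeny_smono[OF F _ ne AN[OF xy(1)]] by blast
        then show False using xy(3) by simp
      next
        assume "(y,x)\<in>E\<^sup>*"
        then have "P y < P x" unfolding P_def using progeny_smono[OF F _ ne[symmetric] AN[OF xy(2)]] by blast
        then show False using xy(3) by simp
      qed
    qed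
  qed
  have G1: "{x \<in> N. Mf N E x \<noteq> 0} = A"
  proof (intro equalityI subsetI)
    fix x assume "x \<in> {x \<in> N. Mf N E x \<noteq> 0}"
    then have x: "x \<in> N" "Mf N E x \<noteq> 0" by simp_all
    show "x \<in> A"
    proof (rule ccontr)
      assume "x \<notin> A"
      then have "Mf N E x = 0" using Mf_zero[OF x(1), of E] unfolding A_def by simp
      then show False using x(2) by simp
    qed
  next
    fix x assume xA: "x \<in> A"
    have "Mf N E x > 0" using Mf_pos[OF F xA[unfolded A_def]] .
    then show "x \<in> {x \<in> N. Mf N E x \<noteq> 0}" using AN[OF xA] by simp
  qed
  have G2: "\<exists>a. bij_betw a {1..k} A \<and> (\<forall>i j. 1 \<le> i \<and> i < j \<and> j \<le> k \<longrightarrow> P (a i) < P (a j))"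
    unfolding k_def using enum_exists[OF fin inj] .
  have G3: "a k = r
              \<and> (k = 1 \<longrightarrow> Mf N E r = 1/2)
              \<and> (k \<ge> 2 \<longrightarrow>
                   (\<forall>i. 1 < i \<and> i \<le> k \<longrightarrow>
                      Mf N E (a i) = 1/2 * log 2 (real (P (a i)) / real (P (a (i - 1)))))
                 \<and> 1/2 * log 2 (2 * real (P (a 1)) / real (Pstar N E)) \<le> Mf N E (a 1)
                 \<and> Mf N E (a 1) \<le> 1/2)"
    if b: "bij_betw a {1..k} A" and m: "\<forall>i j. 1 \<le> i \<and> i < j \<and> j \<le> k \<longrightarrow> P (a i) < P (a j)" for a
  proof -
    have img: "a ` {1..k} = A" using b unfolding bij_betw_def by blast
    have aA: "a i \<in> A" if "i \<in> {1..k}" for i using imageI[OF that, of a] img by simp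
    have "A \<noteq> {}" using rA by blast
    then have kpos: "k \<ge> 1" unfolding k_def using fin card_gt_0_iff[of A] by simp
    have ord: "i < j" if "i \<in> {1..k}" "j \<in> {1..k}" "P (a i) < P (a j)" for i j
      using enum_props[OF b m that] .
    have ak: "a k = r"
    proof -
      have "r \<in> a ` {1..k}" using rA img by simp
      then obtain j where j: "j \<in> {1..k}" "a j = r" by (rule imageE) simp
      have kk: "k \<in> {1..k}" using kpos by simp
      have le: "P (a k) \<le> P r" unfolding P_def using progeny_mono[OF F below[OF aA[OF kk]]] .
      have "\<not> j < k"
      proof
        assume "j < k"
        then have "P (a j) < P (a k)" using m j(1) by auto
        then show False using le j(2) by simp
      qed
      then have "j = k" using j(1) by simp
      then show ?thesis using j by simp
    qed
    have k1: "Mf N E r = 1/2" if "k = 1"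
    proof -
      have "Mf N E r = Mroot N E r" using rroot unfolding Mf_def by simp
      then show ?thesis using that unfolding Mroot_def r_def k_def A_def by simp
    qed
    have step: "Mf N E (a i) = 1/2 * log 2 (real (P (a i)) / real (P (a (i - 1))))"
      if i: "1 < i" "i \<le> k" for i
    proof -
      define x where "x = a i"
      define c where "c = a (i - 1)"
      have iK: "i \<in> {1..k}" "i - 1 \<in> {1..k}" using i by auto
      have xA: "x \<in> A" and cA: "c \<in> A" unfolding x_def c_def using aA iK by auto
      have lt: "P c < P x" unfolding x_def c_def using m i by auto
      have cx: "(c,x)\<in>E\<^sup>*"
      proof -
        from chain[OF cA xA] show ?thesis
        proof
          assume "(x,c)\<in>E\<^sup>*"
          then have "P x \<le> P c" unfolding P_def by (rule progeny_mono[OF F])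
          then show ?thesis using lt by simp
        qed
      qed
      have cnx: "c \<noteq> x" using lt by auto
      have "(c,x)\<in>E\<^sup>+" using cx cnx rtranclD[of c x E] by blast
      then obtain d where d: "(c,d)\<in>E\<^sup>*" "(d,x)\<in>E" using tranclD2[of c x E] by blast
      have dA: "d \<in> A" using A_up[OF F cA[unfolded A_def] d(1)] unfolding A_def .
      have "d \<in> a ` {1..k}" using dA img by simp
      then obtain j where j: "j \<in> {1..k}" "a j = d" by (rule imageE) simp
      have "P c \<le> P d" unfolding P_def using progeny_mono[OF F d(1)] .
      have "P d < P x" unfolding P_def using progeny_smono[OF F r_into_rtrancl[OF d(2)] edge_neq[OF F d(2)] AN[OF dA]] .
      then have ji: "j < i" using ord[OF j(1) iK(1)] j(2) unfolding x_def by simp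
      have "\<not> j < i - 1"
      proof
        assume "j < i - 1"
        then have "P (a j) < P (a (i - 1))" using m j(1) iK(2) by auto
        then show False using \<open>P c \<le> P d\<close> j(2) unfolding c_def by simp
      qed
      then have "j = i - 1" using ji by simp
      then have "d = c" using j(2) unfolding c_def by simp
      then have cxE: "(c,x)\<in>E" using d(2) by simp
      have "c \<in> Aset N (cut E x)" using K3[OF F xA[unfolded A_def] cA[unfolded A_def] cxE] .
      then have "Mf N E x = 1/2 * log 2 (real (P x) / real (P c))"
        using L2[OF F xA[unfolded A_def] _ cxE] unfolding P_def by blast
      then show ?thesis unfolding x_def c_def .
    qed
    have first: "1/2 * log 2 (2 * real (P (a 1)) / real (Pstar N E)) \<le> Mf N E (a 1) \<and> Mf N E (a 1) \<le> 1/2"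
      if k2: "k \<ge> 2"
    proof -
      define x where "x = a 1"
      have i1: "1 \<in> {1..k}" using kpos by simp
      have xA: "x \<in> A" unfolding x_def using aA[OF i1] .
      have x: "x \<in> N" using AN[OF xA] .
      have Px: "P x \<ge> 1" unfolding P_def using progeny_pos[OF F x] .
      have Ps: "P x \<le> Pstar N E" unfolding P_def using Pstar_ge[OF F x] .
      have Pxr: "real (P x) \<ge> 1" "real (P x) \<le> real (Pstar N E)" using Px Ps by simp_all
      show ?thesis
      proof (cases "card (Aset N (cut E x)) = 1")
        case True
        have M: "Mf N E x = 1/2" using Mf_card1[OF xA[unfolded A_def] True] .
        have "log 2 (2 * real (P x) / real (Pstar N E)) \<le> 1"
          by (rule log_ineq2) (use Pxr in auto)
        then show ?thesis unfolding x_def[symmetric] using M by linarith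
      next
        case False
        obtain c where c: "(c,x)\<in>E" "c \<in> Aset N (cut E x)" using L1[OF F xA[unfolded A_def] False] by blast
        have L: "Mf N E x = 1/2 * log 2 (real (P x) / real (P c))
          \<and> P x \<le> 2 * P c \<and> P c < P x \<and> P c \<ge> 1"
          using L2[OF F xA[unfolded A_def] c(2) c(1)] unfolding P_def .
        have cnA: "c \<notin> Aset N E"
        proof
          assume "c \<in> Aset N E"
          then have "c \<in> a ` {1..k}" using img A_def by simp
          then obtain j where j: "j \<in> {1..k}" "a j = c" by (rule imageE) simp
          have "P c < P x" using L by blast
          then have "P (a j) < P (a 1)" using j(2) unfolding x_def by simp
          then have "j < 1" using ord[OF j(1) i1] by blast
          then show False using j(1) by simp
        qed
        obtain r' where r': "r' \<in> roots N E" "2 * P c \<le> P r'"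
          using K4[OF F xA[unfolded A_def] c(2) c(1) cnA] unfolding P_def by blast
        have "r' \<in> N" using r'(1) roots_sub[of N E] by blast
        then have "P r' \<le> Pstar N E" unfolding P_def by (rule Pstar_ge[OF F])
        then have "2 * P c \<le> Pstar N E" using r'(2) by linarith
        then have cs: "2 * real (P c) \<le> real (Pstar N E)" by linarith
        have "P c \<ge> 1" "P x \<le> 2 * P c" using L by blast+
        then have Lr: "real (P c) \<ge> 1" "real (P x) \<le> 2 * real (P c)" by simp_all
        have "log 2 (2 * real (P x) / real (Pstar N E)) \<le> log 2 (real (P x) / real (P c))"
          by (rule log_ineq1) (use cs Lr Pxr in auto)
        moreover have "log 2 (real (P x) / real (P c)) \<le> 1"
          by (rule log_ineq2) (use Lr Pxr in auto)
        moreover have "Mf N E x = 1/2 * log 2 (real (P x) / real (P c))" using L by blast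
        ultimately show ?thesis unfolding x_def[symmetric] by linarith
      qed
    qed
    show ?thesis using ak k1 step first by (intro conjI impI allI) simp_all
  qed
  have G3': "\<forall>a. bij_betw a {1..k} A \<and> (\<forall>i j. 1 \<le> i \<and> i < j \<and> j \<le> k \<longrightarrow> P (a i) < P (a j)) \<longrightarrow>
             (a k = r
              \<and> (k = 1 \<longrightarrow> Mf N E r = 1/2)
              \<and> (k \<ge> 2 \<longrightarrow>
                   (\<forall>i. 1 < i \<and> i \<le> k \<longrightarrow>
                      Mf N E (a i) = 1/2 * log 2 (real (P (a i)) / real (P (a (i - 1)))))
                 \<and> 1/2 * log 2 (2 * real (P (a 1)) / real (Pstar N E)) \<le> Mf N E (a 1)
                 \<and> Mf N E (a 1) \<le> 1/2))"
    using G3 by blast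
  show ?thesis
    unfolding Let_def A_def[symmetric] k_def[symmetric] P_def[symmetric] r_def[symmetric]
    by (intro conjI) (fact G1, fact G2, fact G3')
qed

end
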